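(* No natural number occurs three or more times in the sequence $(a(n))_{n\ge 0}$; that is, there do not exist $x<y<z$ in $\mathbb{N}$ with $a(x)=a(y)=a(z)$.
   Context: $\mathbb{N}=\{0,1,2,\ldots\}$. Let $(F_n)_{n\ge 0}$ be the Fibonacci numbers: $F_0=0$, $F_1=1$, $F_n=F_{n-1}+F_{n-2}$ for $n\ge 2$. Define $(a(n))_{n\ge 0}$ (OEIS A105774) by $a(0)=0$, $a(1)=1$, and for $n\ge 2$, $a(n)=F_{j+1}-a(n-F_j)$, where $j\ge 2$ is the unique index with $F_j<n\le F_{j+1}$. *)

theory Defs
  imports "HOL-Number_Theory.Fib"
begin

text \<open>The index j >= 2 with F_j < n <= F_(j+1), for n >= 2 (unique since fib is
strictly increasing from index 2).\<close>
definition fidx :: "nat \<Rightarrow> nat" where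
  "fidx n = (THE j. 2 \<le> j \<and> fib j < n \<and> n \<le> fib (Suc j))"

text \<open>OEIS A105774: a(0)=0, a(1)=1, a(n) = F_(j+1) - a(n - F_j) for n >= 2.
The recursion is well-founded since F_j >= 1 for j >= 2; to make the definition
total regardless, recursion is guarded by 0 < fib (fidx n) < n (always true).\<close>
function a :: "nat \<Rightarrow> int" where
  "a n = (if n = 0 then 0 else if n = 1 then 1
          else if 0 < fib (fidx n) \<and> fib (fidx n) < n
               then int (fib (Suc (fidx n))) - a (n - fib (fidx n))
               else undefined)"
  by auto
termination
  by (relation "measure id") auto

end

theory Submission
  imports Defs
begin

declare a.simps[simp del]

lemma fib_ge: "n \<le> fib (Suc n)"
proof (induction n rule: nat_less_induct)
  case (1 n)
  show ?case
  proof (cases n)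
    case 0 then show ?thesis by simp
  next
    case (Suc m)
    show ?thesis
    proof (cases m)
      case 0 then show ?thesis using Suc by simp
    next
      case (Suc k)
      have "Suc k \<le> fib (Suc (Suc k))" using 1 \<open>n = Suc m\<close> Suc by auto
      moreover have "0 < fib (Suc k)" by (rule fib_neq_0_nat) simp
      ultimately show ?thesis using \<open>n = Suc m\<close> Suc fib_plus_2[of "Suc k"] by (simp del: fib.simps)
    qed
  qed
qed

lemma fib_strict: "2 \<le> i \<Longrightarrow> i < j \<Longrightarrow> fib i < fib j"
proof -
  assume "2 \<le> i" "i < j"
  then obtain k where "i = Suc (Suc k)" by (metis add_2_eq_Suc le_Suc_ex)
  have "fib (Suc i) > fib i"
    using fib_plus_2[of "Suc k"] fib_neq_0_nat[of "Suc k"] \<open>i = _\<close> by simp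
  moreover have "fib (Suc i) \<le> fib j" using \<open>i < j\<close> fib_mono by simp
  ultimately show ?thesis by simp
qed

lemma fidx_unique:
  assumes "2 \<le> j" "fib j < n" "n \<le> fib (Suc j)"
      and "2 \<le> j'" "fib j' < n" "n \<le> fib (Suc j')"
  shows "j = j'"
proof (rule ccontr)
  assume "j \<noteq> j'"
  then consider "j < j'" | "j' < j" by linarith
  then show False
  proof cases
    case 1 then have "fib (Suc j) \<le> fib j'" using fib_mono by simp
    then show False using assms by simp
  next
    case 2 then have "fib (Suc j') \<le> fib j" using fib_mono by simp
    then show False using assms by simp
  qed
qed

lemma fidx_exists: "2 \<le> n \<Longrightarrow> \<exists>j. 2 \<le> j \<and> fib j < n \<and> n \<le> fib (Suc j)"
proof -
  assume n: "2 \<le> n"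
  define k where "k = (LEAST k. n \<le> fib k)"
  have ex: "n \<le> fib (Suc n)" by (rule fib_ge)
  have k1: "n \<le> fib k" unfolding k_def by (rule LeastI[of _ "Suc n"]) (rule ex)
  have k2: "\<And>i. i < k \<Longrightarrow> \<not> n \<le> fib i" unfolding k_def by (rule not_less_Least)
  have "k \<noteq> 0" proof assume "k = 0" then show False using k1 n by simp qed
  moreover have "k \<noteq> 1" "k \<noteq> 2" using k1 n by auto
  ultimately have "k \<ge> 3" by linarith
  then obtain j where j0: "k = Suc j" by (cases k) auto
  with \<open>k \<ge> 3\<close> have j: "k = Suc j" "2 \<le> j" by auto
  then have "fib j < n" using k2[of j] by simp
  then show ?thesis using j k1 by blast
qed

lemma fidx_prop: "2 \<le> n \<Longrightarrow> 2 \<le> fidx n \<and> fib (fidx n) < n \<and> n \<le> fib (Suc (fidx n))"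
  unfolding fidx_def
  apply (rule theI')
  using fidx_exists fidx_unique by blast

lemma fidx_eq: "2 \<le> j \<Longrightarrow> fib j < n \<Longrightarrow> n \<le> fib (Suc j) \<Longrightarrow> fidx n = j"
  using fidx_prop[of n] fidx_unique[of j n "fidx n"] fib_mono[of 2 j] by auto

lemma a_rec: "2 \<le> n \<Longrightarrow> a n = int (fib (Suc (fidx n))) - a (n - fib (fidx n))"
proof -
  assume n: "2 \<le> n"
  have p: "2 \<le> fidx n \<and> fib (fidx n) < n \<and> n \<le> fib (Suc (fidx n))" using fidx_prop n by blast
  have "0 < fib (fidx n)" using p fib_neq_0_nat by simp
  then show ?thesis using p n by (subst a.simps) simp
qed

lemma a0: "a 0 = 0" by (subst a.simps) simp
lemma a1: "a 1 = 1" by (subst a.simps) simp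

lemma bounds: "2 \<le> n \<Longrightarrow> int (fib (fidx n)) \<le> a n \<and> a n < int (fib (Suc (fidx n)))"
proof (induction n rule: nat_less_induct)
  case (1 n)
  define j where "j = fidx n"
  define m where "m = n - fib j"
  have p: "2 \<le> j" "fib j < n" "n \<le> fib (Suc j)" using fidx_prop[of n] 1 unfolding j_def by auto
  obtain i where i0: "j = Suc i" using p by (cases j) auto
  with p have i: "j = Suc i" "1 \<le> i" by auto
  have fj: "fib (Suc j) = fib j + fib i" using fib_plus_2[of i] i by simp
  have m1: "1 \<le> m" "m \<le> fib i" using p fj unfolding m_def by auto
  have fi: "1 \<le> fib i" using fib_neq_0_nat[of i] i by simp
  have am: "1 \<le> a m \<and> a m \<le> int (fib i)"
  proof (cases "m = 1")
    case True then show ?thesis using a1 fi by simp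
  next
    case False
    then have m2: "2 \<le> m" using m1 by simp
    have "m < n" using m_def p fib_neq_0_nat[of j] by simp
    then have ih: "int (fib (fidx m)) \<le> a m \<and> a m < int (fib (Suc (fidx m)))" using 1 m2 by blast
    have q: "2 \<le> fidx m" "fib (fidx m) < m" using fidx_prop[OF m2] by auto
    have "fidx m < i"
    proof (rule ccontr)
      assume "\<not> fidx m < i"
      then have "fib i \<le> fib (fidx m)" using fib_mono by simp
      then show False using q m1 by simp
    qed
    then have "fib (Suc (fidx m)) \<le> fib i" using fib_mono by simp
    moreover have "1 \<le> fib (fidx m)" using fib_neq_0_nat[of "fidx m"] q by simp
    ultimately show ?thesis using ih by linarith
  qed
  have "a n = int (fib (Suc j)) - a m" using a_rec[of n] 1 unfolding j_def m_def by simp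
  then show ?case using am fj unfolding j_def[symmetric] by simp
qed

lemma same_block:
  assumes "2 \<le> x" "2 \<le> y" "a x = a y" shows "fidx x = fidx y"
proof (rule ccontr)
  assume ne: "fidx x \<noteq> fidx y"
  have bx: "int (fib (fidx x)) \<le> a x \<and> a x < int (fib (Suc (fidx x)))" using bounds assms by blast
  have by': "int (fib (fidx y)) \<le> a y \<and> a y < int (fib (Suc (fidx y)))" using bounds assms by blast
  consider "fidx x < fidx y" | "fidx y < fidx x" using ne by linarith
  then show False
  proof cases
    case 1 then have "fib (Suc (fidx x)) \<le> fib (fidx y)" using fib_mono by simp
    then show False using bx by' assms by linarith
  next
    case 2 then have "fib (Suc (fidx y)) \<le> fib (fidx x)" using fib_mono by simp
    then show False using bx by' assms by linarith
  qed
qed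

lemma a_pos: "1 \<le> n \<Longrightarrow> 1 \<le> a n"
proof -
  assume "1 \<le> n"
  show ?thesis
  proof (cases "n = 1")
    case True then show ?thesis using a1 by simp
  next
    case False
    then have "2 \<le> n" using \<open>1 \<le> n\<close> by simp
    then have "2 \<le> fidx n" using fidx_prop by blast
    then have "1 \<le> fib (fidx n)" using fib_neq_0_nat[of "fidx n"] by simp
    then show ?thesis using bounds[OF \<open>2 \<le> n\<close>] by linarith
  qed
qed

lemma val1: "2 \<le> y \<Longrightarrow> a y = 1 \<Longrightarrow> y = 2"
proof -
  assume y: "2 \<le> y" "a y = 1"
  have b: "int (fib (fidx y)) \<le> a y" "a y < int (fib (Suc (fidx y)))" using bounds y(1) by auto
  have q: "2 \<le> fidx y" "fib (fidx y) < y" "y \<le> fib (Suc (fidx y))" using fidx_prop y(1) by auto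
  have "fidx y = 2"
  proof (rule ccontr)
    assume "fidx y \<noteq> 2"
    then have "3 \<le> fidx y" using q by simp
    then have "fib 3 \<le> fib (fidx y)" using fib_mono by blast
    moreover have "fib 3 = 2" by (simp add: numeral_3_eq_3)
    ultimately show False using b y by linarith
  qed
  then show ?thesis using q y by (simp add: numeral_3_eq_3)
qed

lemma no_triple: "\<forall>x y. x < y \<and> y < z \<longrightarrow> \<not> (a x = a y \<and> a y = a z)"
proof (induction z rule: nat_less_induct)
  case (1 z)
  show ?case
  proof (intro allI impI notI)
    fix x y assume o: "x < y \<and> y < z" and e: "a x = a y \<and> a y = a z"
    have x1: "x \<noteq> 0"
    proof
      assume "x = 0"
      then have "a y = 0" using a0 e by argo
      moreover have "1 \<le> a y" using a_pos[of y] o by simp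
      ultimately show False by simp
    qed
    show False
    proof (cases "x = 1")
      case True
      then have "a y = 1" "a z = 1" using e a1 by argo+
      then have "y = 2" "z = 2" using val1 o True by auto
      then show False using o by simp
    next
      case False
      then have x2: "2 \<le> x" using x1 by simp
      have y2: "2 \<le> y" "2 \<le> z" using x2 o by auto
      have exy: "a x = a y" and eyz: "a y = a z" using e by blast+
      have fy: "fidx x = fidx y" "fidx y = fidx z"
        using same_block[OF x2 y2(1) exy] same_block[OF y2 eyz] by blast+
      define j where "j = fidx x"
      have px: "fib j < x" using fidx_prop[OF x2] j_def by simp
      have rx: "a x = int (fib (Suc j)) - a (x - fib j)" using a_rec[OF x2] unfolding j_def .
      have ry: "a y = int (fib (Suc j)) - a (y - fib j)" using a_rec[OF y2(1)] fy unfolding j_def by simp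
      have rz: "a z = int (fib (Suc j)) - a (z - fib j)" using a_rec[OF y2(2)] fy unfolding j_def by simp
      have ey: "a (y - fib j) = a (x - fib j)" using e rx ry by linarith
      have ez: "a (z - fib j) = a (y - fib j)" using e ry rz by linarith
      have "2 \<le> j" using fidx_prop[OF x2] j_def by simp
      then have "0 < fib j" using fib_neq_0_nat by simp
      then have "z - fib j < z" using px o by simp
      then have "\<forall>x' y'. x' < y' \<and> y' < z - fib j \<longrightarrow> \<not> (a x' = a y' \<and> a y' = a (z - fib j))"
        using 1 by blast
      moreover have "x - fib j < y - fib j" "y - fib j < z - fib j" using px o by auto
      ultimately have "\<not> (a (x - fib j) = a (y - fib j) \<and> a (y - fib j) = a (z - fib j))" by blast
      then show False using ey ez by argo
    qed
  qed
qed

theorem proposition1: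
  shows "\<not> (\<exists>x y z :: nat. x < y \<and> y < z \<and> a x = a y \<and> a y = a z)"
  using no_triple by blast

end
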